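(* Let $(C,\mathfrak p,\mathfrak d)$ be a regular $q$-cycle coalgebra with $\mathfrak p_{11}^1\ne0$. Then $\mathfrak d_{1r}^1=\mathfrak p_{1r}^1$ for all $r\in\{0,\dots,n-1\}$.
   Context: $K$ is an algebraically closed field of characteristic $0$ and $n\ge2$. $C$ is the coalgebra dual to $K[y]/\langle y^n\rangle$: basis $x_0,\dots,x_{n-1}$, $\Delta(x_i)=\sum_{j+k=i}x_j\otimes x_k$, $\epsilon(x_i)=\delta_{i0}$; $C\otimes C$ has the tensor product coalgebra structure; Sweedler notation $\Delta(b)=b_{(1)}\otimes b_{(2)}$. For linear maps $\mathfrak p,\mathfrak d\colon C\otimes C\to C$ write $a\cdot b=\mathfrak p(a\otimes b)$, $a:b=\mathfrak d(a\otimes b)$, $\mathfrak p(x_i\otimes x_j)=\sum_{k=0}^{n-1}\mathfrak p_{ij}^kx_k$, $\mathfrak d(x_i\otimes x_j)=\sum_{k=0}^{n-1}\mathfrak d_{ij}^kx_k$. A triple $(C,\mathfrak p,\mathfrak d)$ with $\mathfrak p,\mathfrak d$ coalgebra morphisms is a regular $q$-magma coalgebra if there are coalgebra morphisms $a\otimes b\mapsto a^b$, $a\otimes b\mapsto a_b$ from $C\otimes C$ to $C$ with $a^{b_{(1)}}\cdot b_{(2)}=(a\cdot b_{(1)})^{b_{(2)}}=\epsilon(b)a$ and $(a:b_{(2)})_{b_{(1)}}=a_{b_{(2)}}:b_{(1)}=\epsilon(b)a$. It is a regular $q$-cycle coalgebra if moreover for all $a,b,c$: (1) $(a\cdot b_{(1)})\cdot(c:b_{(2)})=(a\cdot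 c_{(2)})\cdot(b\cdot c_{(1)})$; (2) $(a\cdot b_{(1)}):(c\cdot b_{(2)})=(a:c_{(2)})\cdot(b:c_{(1)})$; (3) $(a:b_{(1)}):(c:b_{(2)})=(a:c_{(2)}):(b\cdot c_{(1)})$. *)

theory Defs
  imports "HOL-Computational_Algebra.Polynomial" "HOL-Library.Function_Algebras"
begin

definition alg_closed :: "'a::field itself \<Rightarrow> bool" where
  "alg_closed _ \<longleftrightarrow> (\<forall>q::'a poly. degree q > 0 \<longrightarrow> (\<exists>z. poly q z = 0))"

text \<open>Elements of C are coefficient vectors w.r.t. the basis x_0..x_(n-1)
  (functions nat => 'a, zero outside {0..<n}). A linear map f : C (x) C -> C
  is given by its structure constants F i j k, with f(x_i (x) x_j) = sum_k F i j k x_k.\<close>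

definition bvec :: "nat \<Rightarrow> nat \<Rightarrow> 'a::field" where
  "bvec i = (\<lambda>k. if k = i then 1 else 0)"

definition bil :: "nat \<Rightarrow> (nat \<Rightarrow> nat \<Rightarrow> nat \<Rightarrow> 'a::field) \<Rightarrow> (nat \<Rightarrow> 'a) \<Rightarrow> (nat \<Rightarrow> 'a) \<Rightarrow> (nat \<Rightarrow> 'a)" where
  "bil n F u v = (\<lambda>k. if k < n then (\<Sum>i<n. \<Sum>j<n. u i * v j * F i j k) else 0)"

text \<open>f is a coalgebra morphism C (x) C -> C (tensor product coalgebra structure on C (x) C),
  written out on basis elements: Delta(f(x_i (x) x_j)) = (f (x) f)(Delta(x_i (x) x_j))
  and eps(f(x_i (x) x_j)) = eps(x_i) eps(x_j).\<close>
definition coalg_mor :: "nat \<Rightarrow> (nat \<Rightarrow> nat \<Rightarrow> nat \<Rightarrow> 'a::field) \<Rightarrow> bool" where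
  "coalg_mor n F \<longleftrightarrow>
     (\<forall>i<n. \<forall>j<n. \<forall>k<n. \<forall>m<n.
        (if k + m < n then F i j (k + m) else 0) =
        (\<Sum>a\<le>i. \<Sum>c\<le>j. F a c k * F (i - a) (j - c) m)) \<and>
     (\<forall>i<n. \<forall>j<n. F i j 0 = (if i = 0 \<and> j = 0 then 1 else 0))"

text \<open>Regular q-magma coalgebra: p, d coalgebra morphisms, and there exist coalgebra
  morphisms U (a (x) b |-> a^b) and L (a (x) b |-> a_b) satisfying the axioms, stated for
  basis elements a = x_i, b = x_j (the identities are linear in a and b);
  Delta(x_j) = sum_(s+t=j) x_s (x) x_t, eps(x_j) = delta_(j0).\<close>
definition reg_qmagma :: "nat \<Rightarrow> (nat \<Rightarrow> nat \<Rightarrow> nat \<Rightarrow> 'a::field) \<Rightarrow> (nat \<Rightarrow> nat \<Rightarrow> nat \<Rightarrow> 'a) \<Rightarrow> bool" where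
  "reg_qmagma n P D \<longleftrightarrow> coalg_mor n P \<and> coalg_mor n D \<and>
    (\<exists>U L. coalg_mor n U \<and> coalg_mor n L \<and>
      (\<forall>i<n. \<forall>j<n.
         (\<Sum>s\<le>j. bil n P (bil n U (bvec i) (bvec s)) (bvec (j - s)))
           = (if j = 0 then bvec i else (\<lambda>_. 0)) \<and>
         (\<Sum>s\<le>j. bil n U (bil n P (bvec i) (bvec s)) (bvec (j - s)))
           = (if j = 0 then bvec i else (\<lambda>_. 0)) \<and>
         (\<Sum>s\<le>j. bil n L (bil n D (bvec i) (bvec (j - s))) (bvec s))
           = (if j = 0 then bvec i else (\<lambda>_. 0)) \<and>
         (\<Sum>s\<le>j. bil n D (bil n L (bvec i) (bvec (j - s))) (bvec s))
           = (if j = 0 then bvec i else (\<lambda>_. 0))))"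

text \<open>Regular q-cycle coalgebra: identities (1)-(3) for basis elements a = x_i, b = x_j, c = x_l
  (the identities are trilinear in a, b, c). In each sum, b_(1) = x_s, b_(2) = x_(j-s),
  resp. c_(1) = x_s, c_(2) = x_(l-s).\<close>
definition reg_qcycle :: "nat \<Rightarrow> (nat \<Rightarrow> nat \<Rightarrow> nat \<Rightarrow> 'a::field) \<Rightarrow> (nat \<Rightarrow> nat \<Rightarrow> nat \<Rightarrow> 'a) \<Rightarrow> bool" where
  "reg_qcycle n P D \<longleftrightarrow> reg_qmagma n P D \<and>
    (\<forall>i<n. \<forall>j<n. \<forall>l<n.
       (\<Sum>s\<le>j. bil n P (bil n P (bvec i) (bvec s)) (bil n D (bvec l) (bvec (j - s))))
         = (\<Sum>s\<le>l. bil n P (bil n P (bvec i) (bvec (l - s))) (bil n P (bvec j) (bvec s))) \<and>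
       (\<Sum>s\<le>j. bil n D (bil n P (bvec i) (bvec s)) (bil n P (bvec l) (bvec (j - s))))
         = (\<Sum>s\<le>l. bil n P (bil n D (bvec i) (bvec (l - s))) (bil n D (bvec j) (bvec s))) \<and>
       (\<Sum>s\<le>j. bil n D (bil n D (bvec i) (bvec s)) (bil n D (bvec l) (bvec (j - s))))
         = (\<Sum>s\<le>l. bil n D (bil n D (bvec i) (bvec (l - s))) (bil n P (bvec j) (bvec s))))"

end

theory Submission
  imports Defs "HOL-Computational_Algebra.Formal_Power_Series"
begin

lemma sum_single: "finite A \<Longrightarrow> a \<in> A \<Longrightarrow> (\<And>x. x \<in> A \<Longrightarrow> x \<noteq> a \<Longrightarrow> f x = 0) \<Longrightarrow> sum f A = f a"
  by (subst sum.remove[of A a]) (auto intro: sum.neutral)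

lemma sum_fun_at: "(\<Sum>a\<in>A. f a) x = (\<Sum>a\<in>A. f a x)"
  by (induct A rule: infinite_finite_induct) auto

locale cm =
  fixes n :: nat and F :: "nat \<Rightarrow> nat \<Rightarrow> nat \<Rightarrow> 'a::field_char_0"
  assumes cm: "coalg_mor n F" and n2: "2 \<le> n"
begin

lemma F0: "i < n \<Longrightarrow> j < n \<Longrightarrow> F i j 0 = (if i = 0 \<and> j = 0 then 1 else 0)"
  using cm unfolding coalg_mor_def by blast

lemma Frec: "k + 1 < n \<Longrightarrow> i < n \<Longrightarrow> j < n \<Longrightarrow>
   F i j (k + 1) = (\<Sum>a\<le>i. \<Sum>c\<le>j. F a c 1 * F (i - a) (j - c) k)"
proof -
  assume h: "k + 1 < n" "i < n" "j < n"
  have "(if 1 + k < n then F i j (1 + k) else 0) = (\<Sum>a\<le>i. \<Sum>c\<le>j. F a c 1 * F (i - a) (j - c) k)"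
  proof -
    have all: "\<forall>i<n. \<forall>j<n. \<forall>k<n. \<forall>m<n. (if k + m < n then F i j (k + m) else 0) =
        (\<Sum>a\<le>i. \<Sum>c\<le>j. F a c k * F (i - a) (j - c) m)" using cm unfolding coalg_mor_def by blast
    have "1 < n" "k < n" using h n2 by auto
    from all[rule_format, OF h(2) h(3) this] show ?thesis .
  qed
  with h show ?thesis by (simp add: add.commute)
qed

lemma Ftrunc: "i < n \<Longrightarrow> j < n \<Longrightarrow> k < n \<Longrightarrow> m < n \<Longrightarrow> n \<le> k + m \<Longrightarrow>
   (\<Sum>a\<le>i. \<Sum>c\<le>j. F a c k * F (i - a) (j - c) m) = 0"
proof -
  assume h: "i < n" "j < n" "k < n" "m < n" "n \<le> k + m"
  have "(if k + m < n then F i j (k + m) else 0) = (\<Sum>a\<le>i. \<Sum>c\<le>j. F a c k * F (i - a) (j - c) m)"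
    using cm h unfolding coalg_mor_def by blast
  with h show ?thesis by simp
qed

lemma F00pow: "k < n \<Longrightarrow> F 0 0 k = F 0 0 1 ^ k"
proof (induct k)
  case 0 then show ?case using F0 n2 by simp
next
  case (Suc k)
  then have "F 0 0 (k + 1) = F 0 0 1 * F 0 0 k" using Frec[of k 0 0] n2 by simp
  with Suc show ?case by simp
qed

lemma F001: "F 0 0 1 = 0"
proof -
  have "(\<Sum>a\<le>0. \<Sum>c\<le>0. F a c (n-1) * F (0 - a) (0 - c) (n-1)) = 0"
    using Ftrunc[of 0 0 "n-1" "n-1"] n2 by simp
  then have "F 0 0 (n-1) = 0" by simp
  then have "F 0 0 1 ^ (n-1) = 0" using F00pow[of "n-1"] n2 by simp
  then show ?thesis using n2 by simp
qed

lemma deg: "i < n \<Longrightarrow> j < n \<Longrightarrow> k < n \<Longrightarrow> i + j < k \<Longrightarrow> F i j k = 0"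
proof (induct k arbitrary: i j)
  case 0 then show ?case by simp
next
  case (Suc k)
  have "F i j (k + 1) = (\<Sum>a\<le>i. \<Sum>c\<le>j. F a c 1 * F (i - a) (j - c) k)"
    using Frec Suc by simp
  also have "\<dots> = 0"
  proof (intro sum.neutral ballI)
    fix a c assume a: "a \<in> {..i}" and c: "c \<in> {..j}"
    show "F a c 1 * F (i - a) (j - c) k = 0"
    proof (cases "a = 0 \<and> c = 0")
      case True then show ?thesis using F001 by simp
    next
      case False
      then have "F (i - a) (j - c) k = 0" using Suc a c by auto
      then show ?thesis by simp
    qed
  qed
  finally show ?case by simp
qed

lemma V:
  assumes G: "\<forall>c<m. F 0 c 1 = 0"
  shows "a < n \<Longrightarrow> c < n \<Longrightarrow> k < n \<Longrightarrow> c < m * (k - a) \<Longrightarrow> F a c k = 0"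
proof (induct k arbitrary: a c)
  case 0 then show ?case by simp
next
  case (Suc k)
  have ak: "a \<le> k" using Suc.prems(4) by (cases "a \<le> k") auto
  have "F a c (k + 1) = (\<Sum>a1\<le>a. \<Sum>c1\<le>c. F a1 c1 1 * F (a - a1) (c - c1) k)"
    using Frec Suc.prems by simp
  also have "\<dots> = 0"
  proof (intro sum.neutral ballI)
    fix a1 c1 assume a1: "a1 \<in> {..a}" and c1: "c1 \<in> {..c}"
    show "F a1 c1 1 * F (a - a1) (c - c1) k = 0"
    proof (cases "a1 = 0")
      case True
      show ?thesis
      proof (cases "c1 < m")
        case True then show ?thesis using G \<open>a1 = 0\<close> by simp
      next
        case False
        have e: "m * (Suc k - a) = m * (k - a) + m" using ak
          by (simp add: Suc_diff_le)
        have "c - c1 < m * (k - (a - a1))" using Suc.prems(4) False True e c1 by auto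
        then have "F (a - a1) (c - c1) k = 0" using Suc by auto
        then show ?thesis by simp
      qed
    next
      case False
      have "Suc k - a \<le> k - (a - a1)" using False a1 ak by auto
      then have "m * (Suc k - a) \<le> m * (k - (a - a1))" by (rule mult_le_mono2)
      then have "c - c1 < m * (k - (a - a1))" using Suc.prems(4) by linarith
      then have "F (a - a1) (c - c1) k = 0" using Suc by auto
      then show ?thesis by simp
    qed
  qed
  finally show ?case by simp
qed

lemma Fkk: "k < n \<Longrightarrow> F k 0 k = F 1 0 1 ^ k"
proof (induct k)
  case 0 then show ?case using F0 n2 by simp
next
  case (Suc k)
  have "F (Suc k) 0 (k + 1) = (\<Sum>a1\<le>Suc k. \<Sum>c1\<le>0. F a1 c1 1 * F (Suc k - a1) (0 - c1) k)"
    using Frec[of k "Suc k" 0] Suc.prems n2 by simp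
  also have "\<dots> = (\<Sum>a1\<le>Suc k. F a1 0 1 * F (Suc k - a1) 0 k)" by simp
  also have "\<dots> = F 1 0 1 * F (Suc k - 1) 0 k"
  proof (rule sum_single)
    fix x assume x: "x \<in> {..Suc k}" "x \<noteq> 1"
    show "F x 0 1 * F (Suc k - x) 0 k = 0"
    proof (cases "x = 0")
      case True then show ?thesis using F001 by simp
    next
      case False
      then have "F (Suc k - x) 0 k = 0" using x Suc.prems by (intro deg) auto
      then show ?thesis by simp
    qed
  qed auto
  finally show ?case using Suc by simp
qed

lemma T:
  assumes G: "\<forall>c<m. F 0 c 1 = 0" and m1: "1 \<le> m" and mn: "m < n"
  shows "Suc k < n \<Longrightarrow> F k m (Suc k) = of_nat (Suc k) * F 1 0 1 ^ k * F 0 m 1"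
proof (induct k)
  case 0 then show ?case by simp
next
  case (Suc k)
  let ?X = "\<lambda>a1. \<Sum>c1\<le>m. F a1 c1 1 * F (Suc k - a1) (m - c1) (Suc k)"
  have "F (Suc k) m (Suc k + 1) = (\<Sum>a1\<le>Suc k. ?X a1)"
    using Frec[of "Suc k" "Suc k" m] Suc.prems mn by simp
  also have "\<dots> = (\<Sum>a1\<in>{0,1}. ?X a1)"
  proof (rule sum.mono_neutral_right)
    show "\<forall>i\<in>{..Suc k} - {0, 1}. ?X i = 0"
    proof (intro ballI sum.neutral)
      fix a1 c1 assume a1: "a1 \<in> {..Suc k} - {0, 1}" and c1: "c1 \<in> {..m}"
      have "m * 2 \<le> m * (Suc k - (Suc k - a1))" using a1 by (intro mult_le_mono2) auto
      then have lt: "m - c1 < m * (Suc k - (Suc k - a1))" using m1 by linarith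
      have "Suc k - a1 < n" "m - c1 < n" "Suc k < n" using Suc.prems mn by auto
      from V[OF G this lt] have "F (Suc k - a1) (m - c1) (Suc k) = 0" .
      then show "F a1 c1 1 * F (Suc k - a1) (m - c1) (Suc k) = 0" by simp
    qed
  qed auto
  also have "\<dots> = ?X 0 + ?X 1" by simp
  finally have S: "F (Suc k) m (Suc k + 1) = ?X 0 + ?X 1" .
  have X0: "?X 0 = F 0 m 1 * F (Suc k - 0) (m - m) (Suc k)"
  proof (rule sum_single)
    fix x assume "x \<in> {..m}" "x \<noteq> m"
    then show "F 0 x 1 * F (Suc k - 0) (m - x) (Suc k) = 0" using G by simp
  qed auto
  have X1: "?X 1 = F 1 0 1 * F (Suc k - 1) (m - 0) (Suc k)"
  proof (rule sum_single)
    fix x assume x: "x \<in> {..m}" "x \<noteq> 0"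
    have lt: "m - x < m * (Suc k - k)" using x m1 by simp
    have "k < n" "m - x < n" "Suc k < n" using Suc.prems mn by auto
    from V[OF G this lt] have "F k (m - x) (Suc k) = 0" .
    then show "F 1 x 1 * F (Suc k - 1) (m - x) (Suc k) = 0" by simp
  qed auto
  have fk: "F (Suc k) 0 (Suc k) = F 1 0 1 ^ Suc k" using Fkk[of "Suc k"] Suc.prems by simp
  have ih: "F k m (Suc k) = of_nat (Suc k) * F 1 0 1 ^ k * F 0 m 1" using Suc by simp
  have "F (Suc k) m (Suc (Suc k)) = F 0 m 1 * F (Suc k) 0 (Suc k) + F 1 0 1 * F k m (Suc k)"
    using S X0 X1 by simp
  also have "\<dots> = F 0 m 1 * F 1 0 1 ^ Suc k + F 1 0 1 * (of_nat (Suc k) * F 1 0 1 ^ k * F 0 m 1)"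
    unfolding fk ih ..
  also have "\<dots> = of_nat (Suc (Suc k)) * F 1 0 1 ^ Suc k * F 0 m 1"
    by (simp add: algebra_simps)
  finally show ?case .
qed

lemma Gzero:
  assumes a: "F 1 0 1 \<noteq> 0"
  shows "j < n \<Longrightarrow> F 0 j 1 = 0"
proof (induct j rule: less_induct)
  case (less m)
  show ?case
  proof (cases "m = 0")
    case True then show ?thesis using F001 by simp
  next
    case False
    then have m1: "1 \<le> m" by simp
    have G: "\<forall>c<m. F 0 c 1 = 0" using less by auto
    obtain N where nN: "n = Suc (Suc N)" using n2 by (metis add_2_eq_Suc le_Suc_ex)
    let ?Y = "\<lambda>a. \<Sum>c\<le>m. F a c (Suc N) * F (Suc N - a) (m - c) 1"
    have Z: "(\<Sum>a\<le>Suc N. \<Sum>c\<le>m. F a c (Suc N) * F (Suc N - a) (m - c) 1) = 0"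
      using Ftrunc[of "Suc N" m "Suc N" 1] less.prems nN by simp
    have "(\<Sum>a\<le>Suc N. ?Y a) = (\<Sum>a\<in>{N, Suc N}. ?Y a)"
    proof (rule sum.mono_neutral_right)
      show "\<forall>i\<in>{..Suc N} - {N, Suc N}. ?Y i = 0"
      proof (intro ballI sum.neutral)
        fix a c assume a: "a \<in> {..Suc N} - {N, Suc N}" and c: "c \<in> {..m}"
        have "m * 2 \<le> m * (Suc N - a)" using a by (intro mult_le_mono2) auto
        moreover have "c \<le> m" using c by simp
        ultimately have lt: "c < m * (Suc N - a)" using m1 by linarith
        have "a < n" "c < n" "Suc N < n" using a c less.prems nN by auto
        from V[OF G this lt] show "F a c (Suc N) * F (Suc N - a) (m - c) 1 = 0" by simp
      qed
    qed auto
    also have "\<dots> = ?Y N + ?Y (Suc N)" by simp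
    finally have S: "?Y N + ?Y (Suc N) = 0" using Z by simp
    have Y1: "?Y (Suc N) = F (Suc N) 0 (Suc N) * F (Suc N - Suc N) (m - 0) 1"
    proof (rule sum_single)
      fix x assume x: "x \<in> {..m}" "x \<noteq> 0"
      then show "F (Suc N) x (Suc N) * F (Suc N - Suc N) (m - x) 1 = 0" using G by simp
    qed auto
    have Y0: "?Y N = F N m (Suc N) * F (Suc N - N) (m - m) 1"
    proof (rule sum_single)
      fix x assume x: "x \<in> {..m}" "x \<noteq> m"
      then have lt: "x < m * (Suc N - N)" by simp
      have "N < n" "x < n" "Suc N < n" using x less.prems nN by auto
      from V[OF G this lt] show "F N x (Suc N) * F (Suc N - N) (m - x) 1 = 0" by simp
    qed auto
    have fk: "F (Suc N) 0 (Suc N) = F 1 0 1 ^ Suc N" using Fkk[of "Suc N"] nN by simp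
    have t: "F N m (Suc N) = of_nat (Suc N) * F 1 0 1 ^ N * F 0 m 1"
      using T[OF G m1 less.prems, of N] nN by simp
    have "0 = F 1 0 1 ^ Suc N * F 0 m 1 + of_nat (Suc N) * F 1 0 1 ^ N * F 0 m 1 * F 1 0 1"
      using S Y0 Y1 fk t by (simp add: algebra_simps)
    also have "\<dots> = of_nat n * F 1 0 1 ^ Suc N * F 0 m 1" using nN by (simp add: algebra_simps)
    finally have "of_nat n * F 1 0 1 ^ Suc N * F 0 m 1 = 0" by simp
    moreover have "(of_nat n::'a) \<noteq> 0" using n2 by simp
    ultimately show ?thesis using a by (simp del: of_nat_eq_0_iff)
  qed
qed

lemma G0:
  assumes a: "F 1 0 1 \<noteq> 0"
  shows "j < n \<Longrightarrow> k < n \<Longrightarrow> F 0 j k = (if j = 0 \<and> k = 0 then 1 else 0)"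
proof -
  assume h: "j < n" "k < n"
  have G: "\<forall>c<n. F 0 c 1 = 0" using Gzero[OF a] by auto
  show ?thesis
  proof (cases "k = 0")
    case True then show ?thesis using F0 h n2 by simp
  next
    case False
    then have lt: "j < n * (k - 0)" using h by (simp add: less_le_trans)
    have "0 < n" using n2 by simp
    from V[OF G this h(1) h(2) lt] False show ?thesis by simp
  qed
qed

lemma G1:
  assumes a: "F 1 0 1 \<noteq> 0"
  shows "s < n \<Longrightarrow> k < n \<Longrightarrow> F 1 s k = (if k = 1 then F 1 s 1 else 0)"
proof -
  assume h: "s < n" "k < n"
  have G: "\<forall>c<n. F 0 c 1 = 0" using Gzero[OF a] by auto
  show ?thesis
  proof (cases "k = 0")
    case True then show ?thesis using F0 h n2 by simp
  next
    case False
    show ?thesis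
    proof (cases "k = 1")
      case True then show ?thesis by simp
    next
      case False
      with \<open>k \<noteq> 0\<close> have "1 \<le> k - 1" by simp
      then have "n * 1 \<le> n * (k - 1)" by (intro mult_le_mono2)
      then have lt: "s < n * (k - 1)" using h by linarith
      have "1 < n" using n2 by simp
      from V[OF G this h(1) h(2) lt] False show ?thesis by simp
    qed
  qed
qed

lemma Q:
  assumes hyp: "\<forall>j<m. F j 0 1 = (if j = 1 then 1 else 0)" and m2: "2 \<le> m"
  shows "Suc k < n \<Longrightarrow> j < n \<Longrightarrow> j < m + k \<Longrightarrow> F j 0 (Suc k) = (if j = Suc k then 1 else 0)"
proof (induct k arbitrary: j)
  case 0 then show ?case using hyp by simp
next
  case (Suc k)
  have "F j 0 (Suc k + 1) = (\<Sum>a1\<le>j. \<Sum>c1\<le>0. F a1 c1 1 * F (j - a1) (0 - c1) (Suc k))"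
    using Frec[of "Suc k" j 0] Suc.prems n2 by simp
  also have "\<dots> = (\<Sum>a1\<le>j. F a1 0 1 * F (j - a1) 0 (Suc k))" by simp
  finally have e: "F j 0 (Suc (Suc k)) = (\<Sum>a1\<le>j. F a1 0 1 * F (j - a1) 0 (Suc k))" by simp
  show ?case
  proof (cases "j = 0")
    case True then show ?thesis using e F001 by simp
  next
    case False
    have "(\<Sum>a1\<le>j. F a1 0 1 * F (j - a1) 0 (Suc k)) = F 1 0 1 * F (j - 1) 0 (Suc k)"
    proof (rule sum_single)
      fix x assume x: "x \<in> {..j}" "x \<noteq> 1"
      show "F x 0 1 * F (j - x) 0 (Suc k) = 0"
      proof (cases "x < m")
        case True then show ?thesis using hyp x by simp
      next
        case False
        then have "F (j - x) 0 (Suc k) = 0" using Suc.prems x by (intro deg) auto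
        then show ?thesis by simp
      qed
    qed (use False in auto)
    moreover have "F 1 0 1 = 1" using hyp m2 by simp
    moreover have "F (j - 1) 0 (Suc k) = (if j - 1 = Suc k then 1 else 0)"
    proof -
      have "j - 1 < n" "j - 1 < m + k" using Suc.prems m2 by auto
      from Suc.hyps[OF _ this] Suc.prems show ?thesis by simp
    qed
    ultimately show ?thesis using e False by auto
  qed
qed

lemma pid:
  assumes f1: "f 1 \<noteq> 0" and H: "\<forall>j<n. f j = (\<Sum>c<n. F j 0 c * f c)"
  shows "j < n \<Longrightarrow> F j 0 1 = (if j = 1 then 1 else 0)"
proof (induct j rule: less_induct)
  case (less j)
  show ?case
  proof (cases "j = 0")
    case True then show ?thesis using F001 by simp
  next
    case j0: False
    show ?thesis
    proof (cases "j = 1")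
      case True
      have "(\<Sum>c<n. F 1 0 c * f c) = F 1 0 1 * f 1"
      proof (rule sum_single)
        fix x assume x: "x \<in> {..<n}" "x \<noteq> 1"
        show "F 1 0 x * f x = 0"
        proof (cases "x = 0")
          case True then show ?thesis using F0 n2 by simp
        next
          case False then show ?thesis using x by (simp add: deg)
        qed
      qed (use n2 in auto)
      then have "f 1 = F 1 0 1 * f 1" using H n2 by simp
      then have "(F 1 0 1 - 1) * f 1 = 0" by (simp add: algebra_simps)
      then show ?thesis using True f1 by simp
    next
      case j1: False
      have hyp: "\<forall>i<j. F i 0 1 = (if i = 1 then 1 else 0)" using less by auto
      have j2: "2 \<le> j" using j0 j1 by simp
      have "(\<Sum>c<n. F j 0 c * f c) = (\<Sum>c\<in>{1, j}. F j 0 c * f c)"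
      proof (rule sum.mono_neutral_right)
        show "\<forall>i\<in>{..<n} - {1, j}. F j 0 i * f i = 0"
        proof
          fix x assume x: "x \<in> {..<n} - {1, j}"
          show "F j 0 x * f x = 0"
          proof (cases "x = 0")
            case True then show ?thesis using F0 less.prems j0 by simp
          next
            case False
            then obtain k where k: "x = Suc k" by (cases x) auto
            have "F j 0 (Suc k) = (if j = Suc k then 1 else 0)"
              using Q[OF hyp j2, of k j] x k less.prems j1 by auto
            then show ?thesis using x k by simp
          qed
        qed
      qed (use less.prems n2 in auto)
      also have "\<dots> = F j 0 1 * f 1 + F j 0 j * f j" using j1 by simp
      also have "F j 0 j = 1"
      proof -
        obtain k where k: "j = Suc k" using j0 by (cases j) auto
        show ?thesis using Q[OF hyp j2, of k j] k less.prems j2 by simp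
      qed
      finally have "f j = F j 0 1 * f 1 + f j" using H less.prems by simp
      then show ?thesis using f1 j1 by simp
    qed
  qed
qed

lemma Qfull:
  assumes pid: "\<forall>j<n. F j 0 1 = (if j = 1 then 1 else 0)"
  shows "j < n \<Longrightarrow> k < n \<Longrightarrow> F j 0 k = (if j = k then 1 else 0)"
proof -
  assume h: "j < n" "k < n"
  show ?thesis
  proof (cases k)
    case 0 then show ?thesis using F0 h n2 by simp
  next
    case (Suc k')
    then show ?thesis using Q[OF pid n2, of k' j] h by simp
  qed
qed

lemma sum2: "(\<Sum>c\<le>(1::nat). (g c :: 'b::comm_monoid_add)) = g 0 + g 1"
  by (simp add: atMost_Suc add.commute)

lemma R:
  assumes Qf: "\<And>j k. j < n \<Longrightarrow> k < n \<Longrightarrow> F j 0 k = (if j = k then 1 else 0)"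
  shows "c < n \<Longrightarrow> j < n \<Longrightarrow> F j 1 c = (if 1 \<le> c \<and> c \<le> j + 1 then of_nat c * F (j + 1 - c) 1 1 else 0)"
proof (induct c arbitrary: j)
  case 0 then show ?case using F0 n2 by simp
next
  case (Suc c)
  have "F j 1 (c + 1) = (\<Sum>a1\<le>j. \<Sum>c1\<le>1. F a1 c1 1 * F (j - a1) (1 - c1) c)"
    using Frec[of c j 1] Suc.prems n2 by simp
  also have "\<dots> = (\<Sum>a1\<le>j. F a1 0 1 * F (j - a1) 1 c) + (\<Sum>a1\<le>j. F a1 1 1 * F (j - a1) 0 c)"
    by (simp add: sum2 sum.distrib)
  finally have e: "F j 1 (Suc c) = (\<Sum>a1\<le>j. F a1 0 1 * F (j - a1) 1 c) + (\<Sum>a1\<le>j. F a1 1 1 * F (j - a1) 0 c)"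
    by simp
  have S1: "(\<Sum>a1\<le>j. F a1 0 1 * F (j - a1) 1 c) = (if 1 \<le> j then F (j - 1) 1 c else 0)"
  proof (cases "j = 0")
    case True then show ?thesis using F001 by simp
  next
    case False
    have "(\<Sum>a1\<le>j. F a1 0 1 * F (j - a1) 1 c) = F 1 0 1 * F (j - 1) 1 c"
    proof (rule sum_single)
      fix x assume x: "x \<in> {..j}" "x \<noteq> 1"
      then show "F x 0 1 * F (j - x) 1 c = 0" using Qf[of x 1] Suc.prems by simp
    qed (use False in auto)
    then show ?thesis using False Qf[of 1 1] n2 by simp
  qed
  have S2: "(\<Sum>a1\<le>j. F a1 1 1 * F (j - a1) 0 c) = (if c \<le> j then F (j - c) 1 1 else 0)"
  proof (cases "c \<le> j")
    case True
    have "(\<Sum>a1\<le>j. F a1 1 1 * F (j - a1) 0 c) = F (j - c) 1 1 * F (j - (j - c)) 0 c"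
    proof (rule sum_single)
      fix x assume x: "x \<in> {..j}" "x \<noteq> j - c"
      then show "F x 1 1 * F (j - x) 0 c = 0" using Qf[of "j - x" c] Suc.prems True by auto
    qed auto
    then show ?thesis using True Qf[of c c] Suc.prems by simp
  next
    case False
    have "(\<Sum>a1\<le>j. F a1 1 1 * F (j - a1) 0 c) = 0"
    proof (rule sum.neutral, rule ballI)
      fix x assume x: "x \<in> {..j}"
      then show "F x 1 1 * F (j - x) 0 c = 0" using Qf[of "j - x" c] Suc.prems False by auto
    qed
    then show ?thesis using False by simp
  qed
  show ?case
  proof (cases "j = 0")
    case True
    then show ?thesis using e S1 S2 by auto
  next
    case False
    have ih: "F (j - 1) 1 c = (if 1 \<le> c \<and> c \<le> j then of_nat c * F (j - c) 1 1 else 0)"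
      using Suc.hyps[of "j - 1"] Suc.prems False by simp
    show ?thesis
    proof (cases "c = 0")
      case True then show ?thesis using e S1 S2 ih False F0 Suc.prems by simp
    next
      case c0: False
      show ?thesis
      proof (cases "c \<le> j")
        case True
        then have "F j 1 (Suc c) = of_nat c * F (j - c) 1 1 + F (j - c) 1 1"
          using e S1 S2 ih False c0 by simp
        also have "\<dots> = of_nat (Suc c) * F (j + 1 - Suc c) 1 1" using True by (simp add: algebra_simps)
        finally show ?thesis using True by simp
      next
        case False
        then show ?thesis using e S1 S2 ih \<open>j \<noteq> 0\<close> by simp
      qed
    qed
  qed
qed

lemma SF:
  assumes Qf: "\<And>j k. j < n \<Longrightarrow> k < n \<Longrightarrow> F j 0 k = (if j = k then 1 else 0)"
    and e0: "F 0 1 1 = 0" and jn: "j < n"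
  shows "(\<Sum>c<n. F j 1 c * X c) = (\<Sum>i\<le>j. of_nat (i + 1) * X (i + 1) * F (j - i) 1 1)"
proof -
  define G where "G c = of_nat c * X c * F (j + 1 - c) 1 1" for c
  have L: "(\<Sum>c<n. F j 1 c * X c) = (\<Sum>c<n. if 1 \<le> c \<and> c \<le> j + 1 then G c else 0)"
  proof (rule sum.cong)
    fix c assume "c \<in> {..<n}"
    then have "c < n" by simp
    from R[OF Qf this jn] show "F j 1 c * X c = (if 1 \<le> c \<and> c \<le> j + 1 then G c else 0)"
      by (simp add: G_def)
  qed simp
  have Rr: "(\<Sum>i\<le>j. of_nat (i + 1) * X (i + 1) * F (j - i) 1 1) = (\<Sum>c\<le>Suc j. G c)"
    by (subst sum.atMost_Suc_shift) (simp add: G_def)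
  show ?thesis
  proof (cases "Suc j < n")
    case True
    have "(\<Sum>c<n. if 1 \<le> c \<and> c \<le> j + 1 then G c else 0) = (\<Sum>c\<le>Suc j. if 1 \<le> c \<and> c \<le> j + 1 then G c else 0)"
      by (rule sum.mono_neutral_right) (use True in auto)
    also have "\<dots> = (\<Sum>c\<le>Suc j. G c)" by (rule sum.cong) (auto simp: G_def)
    finally show ?thesis using L Rr by simp
  next
    case False
    then have nj: "n = Suc j" using jn by simp
    have "(\<Sum>c\<le>Suc j. G c) = (\<Sum>c\<le>j. G c)" using e0 by (simp add: G_def)
    also have "\<dots> = (\<Sum>c<n. if 1 \<le> c \<and> c \<le> j + 1 then G c else 0)"
      unfolding nj lessThan_Suc_atMost by (rule sum.cong) (auto simp: G_def)
    finally show ?thesis using L Rr by simp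
  qed
qed

end

context cm begin
lemma coll:
  assumes a: "F 1 0 1 \<noteq> 0" and s: "s < n"
  shows "(\<Sum>a<n. \<Sum>c<n. F 1 s a * Y c * Z a c) = F 1 s 1 * (\<Sum>c<n. Y c * Z 1 c)"
proof -
  have "(\<Sum>a<n. \<Sum>c<n. F 1 s a * Y c * Z a c) = (\<Sum>a<n. F 1 s a * (\<Sum>c<n. Y c * Z a c))"
    by (simp add: sum_distrib_left mult.assoc)
  also have "\<dots> = F 1 s 1 * (\<Sum>c<n. Y c * Z 1 c)"
  proof (rule sum_single)
    fix x assume x: "x \<in> {..<n}" "x \<noteq> 1"
    then show "F 1 s x * (\<Sum>c<n. Y c * Z x c) = 0" using G1[OF a s, of x] by simp
  qed (use n2 in auto)
  finally show ?thesis .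
qed

lemma coll1:
  assumes a: "F 1 0 1 \<noteq> 0" and t: "t < n"
  shows "(\<Sum>c<n. F 1 t c * X c) = F 1 t 1 * X 1"
proof (rule sum_single)
  fix x assume x: "x \<in> {..<n}" "x \<noteq> 1"
  then show "F 1 t x * X x = 0" using G1[OF a t, of x] by simp
qed (use n2 in auto)

lemma coll0:
  assumes a: "F 1 0 1 \<noteq> 0" and t: "t < n"
  shows "(\<Sum>c<n. F 0 t c * X c) = (if t = 0 then X 0 else 0)"
proof -
  have "(\<Sum>c<n. F 0 t c * X c) = F 0 t 0 * X 0"
  proof (rule sum_single)
    fix x assume x: "x \<in> {..<n}" "x \<noteq> 0"
    then show "F 0 t x * X x = 0" using G0[OF a t, of x] by simp
  qed (use n2 in auto)
  then show ?thesis using F0 t n2 by simp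
qed
end

lemma ifm1: "(if P then 1 else 0) * (x::'a::semiring_1) = (if P then x else 0)" by simp
lemma ifm2: "(if P then x else 0) * (y::'a::semiring_1) = (if P then x * y else 0)" by simp
lemma ifm3: "(x::'a::semiring_1) * (if P then 1 else 0) = (if P then x else 0)" by simp

lemma bil_bvec: "i < n \<Longrightarrow> j < n \<Longrightarrow> bil n F (bvec i) (bvec j) = (\<lambda>k. if k < n then F i j k else 0)"
  unfolding bil_def bvec_def by (simp add: ifm1 ifm2 ifm3 if_distrib[of "\<lambda>x. x * _"] cong: if_cong)

lemma bil_nest: "K < n \<Longrightarrow> i < n \<Longrightarrow> s < n \<Longrightarrow> l < n \<Longrightarrow> t < n \<Longrightarrow>
  bil n F (bil n G (bvec i) (bvec s)) (bil n H (bvec l) (bvec t)) K = (\<Sum>a<n. \<Sum>c<n. G i s a * H l t c * F a c K)"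
  by (simp add: bil_bvec) (simp add: bil_def)

lemma bil_right: "K < n \<Longrightarrow> i < n \<Longrightarrow> s < n \<Longrightarrow> t < n \<Longrightarrow>
  bil n F (bil n G (bvec i) (bvec s)) (bvec t) K = (\<Sum>a<n. G i s a * F a t K)"
  by (simp add: bil_bvec) (simp add: bil_def bvec_def ifm1 ifm2 ifm3)

lemma fps_trunc_mult: fixes A B :: "'a::comm_ring_1 fps" shows "(\<And>i. i \<le> j \<Longrightarrow> fps_nth A i = 0) \<Longrightarrow> fps_nth (A * B) j = 0"
  by (simp add: fps_mult_nth)

lemma final_fps:
  fixes Fs Hs Es :: "'a::field_char_0 fps" and l :: 'a
  assumes F0: "fps_nth Fs 0 = 1" and H0: "fps_nth Hs 0 = 1" and E0: "fps_nth Es 0 = 0" and E1: "fps_nth Es 1 = l"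
    and l0: "l \<noteq> 0"
    and EF: "\<And>j. j < n \<Longrightarrow> l * fps_nth (Fs * Hs) j = l * fps_nth Fs j + fps_nth (fps_deriv Fs * Es) j"
    and EH: "\<And>j. j < n \<Longrightarrow> l * fps_nth (Hs * Hs) j = l * fps_nth Hs j + fps_nth (fps_deriv Hs * Es) j"
  shows "t < n \<Longrightarrow> fps_nth Fs t = fps_nth Hs t"
proof -
  define A where "A = fps_deriv Fs * Es - fps_const l * (Fs * Hs - Fs)"
  define B where "B = fps_deriv Hs * Es - fps_const l * (Hs * Hs - Hs)"
  define W where "W = fps_deriv Fs * Hs - fps_deriv Hs * Fs"
  have A0: "fps_nth A j = 0" if "j < n" for j using EF[OF that] unfolding A_def by (simp only: fps_sub_nth fps_mult_left_const_nth) (simp add: algebra_simps)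
  have B0: "fps_nth B j = 0" if "j < n" for j using EH[OF that] unfolding B_def by (simp only: fps_sub_nth fps_mult_left_const_nth) (simp add: algebra_simps)
  have EW: "Es * W = A * Hs - B * Fs" unfolding A_def B_def W_def by (simp add: algebra_simps)
  have EW0: "fps_nth (Es * W) j = 0" if "j < n" for j
  proof -
    have "fps_nth (A * Hs) j = 0" using A0 that by (intro fps_trunc_mult) auto
    moreover have "fps_nth (B * Fs) j = 0" using B0 that by (intro fps_trunc_mult) auto
    ultimately show ?thesis unfolding EW by simp
  qed
  have W0: "i + 1 < n \<Longrightarrow> fps_nth W i = 0" for i
  proof (induct i rule: less_induct)
    case (less i)
    have "fps_nth (Es * W) (Suc i) = (\<Sum>t=0..Suc i. fps_nth Es t * fps_nth W (Suc i - t))" by (simp add: fps_mult_nth)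
    also have "\<dots> = fps_nth Es 1 * fps_nth W (Suc i - 1)"
    proof (rule sum_single)
      fix x assume x: "x \<in> {0..Suc i}" "x \<noteq> 1"
      show "fps_nth Es x * fps_nth W (Suc i - x) = 0"
      proof (cases "x = 0")
        case True then show ?thesis using E0 by simp
      next
        case False
        then have "fps_nth W (Suc i - x) = 0" using x less by (intro less.hyps) auto
        then show ?thesis by simp
      qed
    qed auto
    finally have "l * fps_nth W i = 0" using EW0[of "Suc i"] less.prems E1 by simp
    then show ?case using l0 by simp
  qed
  define u where "u = Fs - Hs"
  have Wu: "W = fps_deriv u * Hs - fps_deriv Hs * u" unfolding W_def u_def by (simp add: algebra_simps)
  have "t < n \<Longrightarrow> fps_nth u t = 0"
  proof (induct t rule: less_induct)
    case (less t)
    show ?case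
    proof (cases t)
      case 0 then show ?thesis unfolding u_def using F0 H0 by simp
    next
      case (Suc s)
      have "fps_nth (fps_deriv Hs * u) s = 0"
      proof -
        have "fps_nth (fps_deriv Hs * u) s = (\<Sum>i=0..s. fps_nth (fps_deriv Hs) i * fps_nth u (s - i))" by (simp add: fps_mult_nth)
        also have "\<dots> = 0" using less Suc by (intro sum.neutral) auto
        finally show ?thesis .
      qed
      moreover have "fps_nth (fps_deriv u * Hs) s = of_nat (Suc s) * fps_nth u (Suc s)"
      proof -
        have "fps_nth (fps_deriv u * Hs) s = (\<Sum>i=0..s. fps_nth (fps_deriv u) i * fps_nth Hs (s - i))" by (simp add: fps_mult_nth)
        also have "\<dots> = fps_nth (fps_deriv u) s * fps_nth Hs (s - s)"
        proof (rule sum_single)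
          fix x assume x: "x \<in> {0..s}" "x \<noteq> s"
          then have "fps_nth u (Suc x) = 0" using less Suc by (intro less.hyps) auto
          then show "fps_nth (fps_deriv u) x * fps_nth Hs (s - x) = 0" by simp
        qed auto
        finally show ?thesis using H0 by simp
      qed
      moreover have "fps_nth W s = 0" using W0[of s] less.prems Suc by simp
      ultimately have "of_nat (Suc s) * fps_nth u (Suc s) = 0" unfolding Wu by simp
      then show ?thesis using Suc by (simp del: of_nat_Suc)
    qed
  qed
  then show "t < n \<Longrightarrow> fps_nth Fs t = fps_nth Hs t" unfolding u_def by simp
qed

theorem proposition4p3:
  fixes n :: nat and P D :: "nat \<Rightarrow> nat \<Rightarrow> nat \<Rightarrow> 'a::field_char_0"
  assumes "alg_closed TYPE('a)"
    and "n \<ge> 2"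
    and "reg_qcycle n P D"
    and "P 1 1 1 \<noteq> 0"
  shows "\<forall>r<n. D 1 r 1 = P 1 r 1"
proof -
  have n2: "2 \<le> n" using assms(2) .
  have n1: "1 < n" "0 < n" using n2 by auto
  have qm: "reg_qmagma n P D" using assms(3) unfolding reg_qcycle_def by blast
  have cyc: "\<forall>i<n. \<forall>j<n. \<forall>l<n.
       (\<Sum>s\<le>j. bil n P (bil n P (bvec i) (bvec s)) (bil n D (bvec l) (bvec (j - s))))
         = (\<Sum>s\<le>l. bil n P (bil n P (bvec i) (bvec (l - s))) (bil n P (bvec j) (bvec s))) \<and>
       (\<Sum>s\<le>j. bil n D (bil n P (bvec i) (bvec s)) (bil n P (bvec l) (bvec (j - s))))
         = (\<Sum>s\<le>l. bil n P (bil n D (bvec i) (bvec (l - s))) (bil n D (bvec j) (bvec s))) \<and>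
       (\<Sum>s\<le>j. bil n D (bil n D (bvec i) (bvec s)) (bil n D (bvec l) (bvec (j - s))))
         = (\<Sum>s\<le>l. bil n D (bil n D (bvec i) (bvec (l - s))) (bil n P (bvec j) (bvec s)))"
    using assms(3) unfolding reg_qcycle_def by blast
  have cmP: "coalg_mor n P" and cmD: "coalg_mor n D" using qm unfolding reg_qmagma_def by auto
  obtain U L where cmU: "coalg_mor n U" and cmL: "coalg_mor n L" and reg:
    "\<forall>i<n. \<forall>j<n.
         (\<Sum>s\<le>j. bil n P (bil n U (bvec i) (bvec s)) (bvec (j - s)))
           = (if j = 0 then bvec i else (\<lambda>_. 0)) \<and>
         (\<Sum>s\<le>j. bil n U (bil n P (bvec i) (bvec s)) (bvec (j - s)))
           = (if j = 0 then bvec i else (\<lambda>_. 0)) \<and>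
         (\<Sum>s\<le>j. bil n L (bil n D (bvec i) (bvec (j - s))) (bvec s))
           = (if j = 0 then bvec i else (\<lambda>_. 0)) \<and>
         (\<Sum>s\<le>j. bil n D (bil n L (bvec i) (bvec (j - s))) (bvec s))
           = (if j = 0 then bvec i else (\<lambda>_. 0))"
    using qm unfolding reg_qmagma_def by blast
  interpret cP: cm n P using cmP n2 by unfold_locales
  interpret cD: cm n D using cmD n2 by unfold_locales
  interpret cU: cm n U using cmU n2 by unfold_locales
  interpret cL: cm n L using cmL n2 by unfold_locales
  have aP: "P 1 0 1 \<noteq> 0"
  proof -
    have "(\<Sum>s\<le>0. bil n P (bil n U (bvec 1) (bvec s)) (bvec (0 - s))) = bvec 1"
      using reg[rule_format, OF n1(1) n1(2)] by simp
    then have "bil n P (bil n U (bvec 1) (bvec 0)) (bvec 0) 1 = 1" by (simp add: bvec_def)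
    then have "(\<Sum>a<n. U 1 0 a * P a 0 1) = 1" using bil_right[of 1 n 1 0 0 P U] n1 by simp
    moreover have "(\<Sum>a<n. U 1 0 a * P a 0 1) = U 1 0 1 * P 1 0 1"
    proof (rule sum_single)
      fix x assume x: "x \<in> {..<n}" "x \<noteq> 1"
      show "U 1 0 x * P x 0 1 = 0"
      proof (cases "x = 0")
        case True then show ?thesis using cU.F0 n1 by simp
      next
        case False then show ?thesis using x n1 by (simp add: cU.deg)
      qed
    qed (use n1 in auto)
    ultimately show ?thesis by auto
  qed
  have aD: "D 1 0 1 \<noteq> 0"
  proof -
    have "(\<Sum>s\<le>0. bil n L (bil n D (bvec 1) (bvec (0 - s))) (bvec s)) = bvec 1"
      using reg[rule_format, OF n1(1) n1(2)] by simp
    then have "bil n L (bil n D (bvec 1) (bvec 0)) (bvec 0) 1 = 1" by (simp add: bvec_def)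
    then have "(\<Sum>a<n. D 1 0 a * L a 0 1) = 1" using bil_right[of 1 n 1 0 0 L D] n1 by simp
    moreover have "(\<Sum>a<n. D 1 0 a * L a 0 1) = D 1 0 1 * L 1 0 1"
    proof (rule sum_single)
      fix x assume x: "x \<in> {..<n}" "x \<noteq> 1"
      show "D 1 0 x * L x 0 1 = 0"
      proof (cases "x = 0")
        case True then show ?thesis using cD.F0 n1 by simp
      next
        case False then show ?thesis using x n1 by (simp add: cD.deg)
      qed
    qed (use n1 in auto)
    ultimately show ?thesis by auto
  qed
  define f where "f t = P 1 t 1" for t
  define h where "h t = D 1 t 1" for t
  have eq1: "(\<Sum>s\<le>j. f s * (\<Sum>c<n. D l (j - s) c * f c)) = (\<Sum>s\<le>l. f (l - s) * (\<Sum>c<n. P j s c * f c))"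
    if jl: "j < n" "l < n" for j l
  proof -
    have "(\<Sum>s\<le>j. bil n P (bil n P (bvec 1) (bvec s)) (bil n D (bvec l) (bvec (j - s))))
         = (\<Sum>s\<le>l. bil n P (bil n P (bvec 1) (bvec (l - s))) (bil n P (bvec j) (bvec s)))"
      using cyc n1 jl by blast
    note EE = this
    have "(\<Sum>s\<le>j. bil n P (bil n P (bvec 1) (bvec s)) (bil n D (bvec l) (bvec (j - s))) 1)
         = (\<Sum>s\<le>l. bil n P (bil n P (bvec 1) (bvec (l - s))) (bil n P (bvec j) (bvec s)) 1)"
      using arg_cong[OF EE, of "\<lambda>g. g 1"] by (simp only: sum_fun_at)
    also have "(\<Sum>s\<le>j. bil n P (bil n P (bvec 1) (bvec s)) (bil n D (bvec l) (bvec (j - s))) 1)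
       = (\<Sum>s\<le>j. f s * (\<Sum>c<n. D l (j - s) c * f c))"
    proof (rule sum.cong)
      fix s :: nat assume "s \<in> {..j}"
      then have s: "s < n" "j - s < n" using jl by auto
      have "bil n P (bil n P (bvec 1) (bvec s)) (bil n D (bvec l) (bvec (j - s))) 1
          = (\<Sum>a<n. \<Sum>c<n. P 1 s a * D l (j - s) c * P a c 1)"
        using bil_nest[of 1 n 1 s l "j - s" P P D] s jl n1 by simp
      also have "\<dots> = f s * (\<Sum>c<n. D l (j - s) c * f c)"
        using cP.coll[OF aP s(1), of "\<lambda>c. D l (j - s) c" "\<lambda>a c. P a c 1"] by (simp add: f_def)
      finally show "bil n P (bil n P (bvec 1) (bvec s)) (bil n D (bvec l) (bvec (j - s))) 1
          = f s * (\<Sum>c<n. D l (j - s) c * f c)" .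
    qed simp
    also have "(\<Sum>s\<le>l. bil n P (bil n P (bvec 1) (bvec (l - s))) (bil n P (bvec j) (bvec s)) 1)
       = (\<Sum>s\<le>l. f (l - s) * (\<Sum>c<n. P j s c * f c))"
    proof (rule sum.cong)
      fix s :: nat assume "s \<in> {..l}"
      then have s: "l - s < n" "s < n" using jl by auto
      have "bil n P (bil n P (bvec 1) (bvec (l - s))) (bil n P (bvec j) (bvec s)) 1
          = (\<Sum>a<n. \<Sum>c<n. P 1 (l - s) a * P j s c * P a c 1)"
        using bil_nest[of 1 n 1 "l - s" j s P P P] s jl n1 by simp
      also have "\<dots> = f (l - s) * (\<Sum>c<n. P j s c * f c)"
        using cP.coll[OF aP s(1), of "\<lambda>c. P j s c" "\<lambda>a c. P a c 1"] by (simp add: f_def)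
      finally show "bil n P (bil n P (bvec 1) (bvec (l - s))) (bil n P (bvec j) (bvec s)) 1
          = f (l - s) * (\<Sum>c<n. P j s c * f c)" .
    qed simp
    finally show ?thesis .
  qed
  have eq3: "(\<Sum>s\<le>j. h s * (\<Sum>c<n. D 1 (j - s) c * h c)) = (\<Sum>s\<le>1. h (1 - s) * (\<Sum>c<n. P j s c * h c))"
    if jl: "j < n" for j
  proof -
    have "(\<Sum>s\<le>j. bil n D (bil n D (bvec 1) (bvec s)) (bil n D (bvec 1) (bvec (j - s))))
         = (\<Sum>s\<le>1. bil n D (bil n D (bvec 1) (bvec (1 - s))) (bil n P (bvec j) (bvec s)))"
      using cyc n1 jl by blast
    note EE = this
    have "(\<Sum>s\<le>j. bil n D (bil n D (bvec 1) (bvec s)) (bil n D (bvec 1) (bvec (j - s))) 1)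
         = (\<Sum>s\<le>1. bil n D (bil n D (bvec 1) (bvec (1 - s))) (bil n P (bvec j) (bvec s)) 1)"
      using arg_cong[OF EE, of "\<lambda>g. g 1"] by (simp only: sum_fun_at)
    also have "(\<Sum>s\<le>j. bil n D (bil n D (bvec 1) (bvec s)) (bil n D (bvec 1) (bvec (j - s))) 1)
       = (\<Sum>s\<le>j. h s * (\<Sum>c<n. D 1 (j - s) c * h c))"
    proof (rule sum.cong)
      fix s :: nat assume "s \<in> {..j}"
      then have s: "s < n" "j - s < n" using jl by auto
      have "bil n D (bil n D (bvec 1) (bvec s)) (bil n D (bvec 1) (bvec (j - s))) 1
          = (\<Sum>a<n. \<Sum>c<n. D 1 s a * D 1 (j - s) c * D a c 1)"
        using bil_nest[of 1 n 1 s 1 "j - s" D D D] s jl n1 by simp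
      also have "\<dots> = h s * (\<Sum>c<n. D 1 (j - s) c * h c)"
        using cD.coll[OF aD s(1), of "\<lambda>c. D 1 (j - s) c" "\<lambda>a c. D a c 1"] by (simp add: h_def)
      finally show "bil n D (bil n D (bvec 1) (bvec s)) (bil n D (bvec 1) (bvec (j - s))) 1
          = h s * (\<Sum>c<n. D 1 (j - s) c * h c)" .
    qed simp
    also have "(\<Sum>s\<le>1. bil n D (bil n D (bvec 1) (bvec (1 - s))) (bil n P (bvec j) (bvec s)) 1)
       = (\<Sum>s\<le>1. h (1 - s) * (\<Sum>c<n. P j s c * h c))"
    proof (rule sum.cong)
      fix s :: nat assume "s \<in> {..1}"
      then have s: "1 - s < n" "s < n" using jl n1 by auto
      have "bil n D (bil n D (bvec 1) (bvec (1 - s))) (bil n P (bvec j) (bvec s)) 1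
          = (\<Sum>a<n. \<Sum>c<n. D 1 (1 - s) a * P j s c * D a c 1)"
        using bil_nest[of 1 n 1 "1 - s" j s D D P] s jl n1 by simp
      also have "\<dots> = h (1 - s) * (\<Sum>c<n. P j s c * h c)"
        using cD.coll[OF aD s(1), of "\<lambda>c. P j s c" "\<lambda>a c. D a c 1"] by (simp add: h_def)
      finally show "bil n D (bil n D (bvec 1) (bvec (1 - s))) (bil n P (bvec j) (bvec s)) 1
          = h (1 - s) * (\<Sum>c<n. P j s c * h c)" .
    qed simp
    finally show ?thesis .
  qed
  have f0: "f 0 \<noteq> 0" using aP by (simp add: f_def)
  have f1: "f 1 \<noteq> 0" using assms(4) by (simp add: f_def)
  have fp: "\<forall>j<n. f j = (\<Sum>c<n. P j 0 c * f c)"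
  proof (intro allI impI)
    fix j assume j: "j < n"
    have "(\<Sum>s\<le>j. f s * (\<Sum>c<n. D 0 (j - s) c * f c)) = (\<Sum>s\<le>j. f s * (if j - s = 0 then f 0 else 0))"
      by (rule sum.cong) (use j cD.coll0[OF aD] in auto)
    also have "\<dots> = f j * (if j - j = 0 then f 0 else 0)"
      by (rule sum_single) auto
    finally have "f j * f 0 = f 0 * (\<Sum>c<n. P j 0 c * f c)" using eq1[OF j n1(2)] by (simp; metis)
    then show "f j = (\<Sum>c<n. P j 0 c * f c)" using f0 by (auto simp: mult.commute)
  qed
  have fq: "\<forall>l<n. f l = (\<Sum>c<n. D l 0 c * f c)"
  proof (intro allI impI)
    fix l assume l: "l < n"
    have "(\<Sum>s\<le>l. f (l - s) * (\<Sum>c<n. P 0 s c * f c)) = (\<Sum>s\<le>l. f (l - s) * (if s = 0 then f 0 else 0))"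
      by (rule sum.cong) (use l cP.coll0[OF aP] in auto)
    also have "\<dots> = f (l - 0) * (if (0::nat) = 0 then f 0 else 0)"
      by (rule sum_single) auto
    finally have "f 0 * (\<Sum>c<n. D l 0 c * f c) = f l * f 0" using eq1[OF n1(2) l] by (simp; metis)
    then show "f l = (\<Sum>c<n. D l 0 c * f c)" using f0 by (auto simp: mult.commute)
  qed
  have pidP: "\<forall>j<n. P j 0 1 = (if j = 1 then 1 else 0)" using cP.pid[OF f1 fp] by blast
  have pidD: "\<forall>j<n. D j 0 1 = (if j = 1 then 1 else 0)" using cD.pid[OF f1 fq] by blast
  have QfP: "\<And>j k. j < n \<Longrightarrow> k < n \<Longrightarrow> P j 0 k = (if j = k then 1 else 0)"
    using cP.Qfull[OF pidP] by blast
  have F0': "f 0 = 1" using pidP n1 by (simp add: f_def)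
  have H0': "h 0 = 1" using pidD n1 by (simp add: h_def)
  have e0: "P 0 1 1 = 0" using cP.Gzero[OF aP] n1 by simp
  have SFP: "(\<Sum>c<n. P j 1 c * X c) = (\<Sum>i\<le>j. of_nat (i + 1) * X (i + 1) * P (j - i) 1 1)"
    if "j < n" for j X using cP.SF[OF QfP e0 that] .
  have Pj0: "(\<Sum>c<n. P j 0 c * X c) = X j" if j: "j < n" for j X
  proof -
    have "(\<Sum>c<n. P j 0 c * X c) = P j 0 j * X j"
      by (rule sum_single) (use j QfP in auto)
    then show ?thesis using QfP[OF j j] by simp
  qed
  have E1: "f 1 * (\<Sum>s\<le>j. f s * h (j - s)) = f 1 * f j + (\<Sum>i\<le>j. of_nat (i + 1) * f (i + 1) * P (j - i) 1 1)"
    if j: "j < n" for j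
  proof -
    have "(\<Sum>s\<le>j. f s * (\<Sum>c<n. D 1 (j - s) c * f c)) = (\<Sum>s\<le>j. f s * (h (j - s) * f 1))"
      by (rule sum.cong) (use j cD.coll1[OF aD] in \<open>auto simp: h_def\<close>)
    also have "\<dots> = f 1 * (\<Sum>s\<le>j. f s * h (j - s))"
      by (simp add: sum_distrib_left algebra_simps)
    finally have L: "(\<Sum>s\<le>j. f s * (\<Sum>c<n. D 1 (j - s) c * f c)) = f 1 * (\<Sum>s\<le>j. f s * h (j - s))" .
    have "(\<Sum>s\<le>1. f (1 - s) * (\<Sum>c<n. P j s c * f c)) = f 1 * (\<Sum>c<n. P j 0 c * f c) + f 0 * (\<Sum>c<n. P j 1 c * f c)"
      by (simp add: cP.sum2)
    also have "\<dots> = f 1 * f j + (\<Sum>i\<le>j. of_nat (i + 1) * f (i + 1) * P (j - i) 1 1)"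
      using Pj0[OF j] SFP[OF j] F0' by simp
    finally show ?thesis using eq1[OF j n1(1)] L by simp
  qed
  have E3: "h 1 * (\<Sum>s\<le>j. h s * h (j - s)) = h 1 * h j + (\<Sum>i\<le>j. of_nat (i + 1) * h (i + 1) * P (j - i) 1 1)"
    if j: "j < n" for j
  proof -
    have "(\<Sum>s\<le>j. h s * (\<Sum>c<n. D 1 (j - s) c * h c)) = (\<Sum>s\<le>j. h s * (h (j - s) * h 1))"
      by (rule sum.cong) (use j cD.coll1[OF aD] in \<open>auto simp: h_def\<close>)
    also have "\<dots> = h 1 * (\<Sum>s\<le>j. h s * h (j - s))"
      by (simp add: sum_distrib_left algebra_simps)
    finally have L: "(\<Sum>s\<le>j. h s * (\<Sum>c<n. D 1 (j - s) c * h c)) = h 1 * (\<Sum>s\<le>j. h s * h (j - s))" .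
    have "(\<Sum>s\<le>1. h (1 - s) * (\<Sum>c<n. P j s c * h c)) = h 1 * (\<Sum>c<n. P j 0 c * h c) + h 0 * (\<Sum>c<n. P j 1 c * h c)"
      by (simp add: cP.sum2)
    also have "\<dots> = h 1 * h j + (\<Sum>i\<le>j. of_nat (i + 1) * h (i + 1) * P (j - i) 1 1)"
      using Pj0[OF j] SFP[OF j] H0' by simp
    finally show ?thesis using eq3[OF j] L by simp
  qed
  have h1: "h 1 = f 1"
  proof -
    have "f 1 * (\<Sum>s\<le>1. f s * h (1 - s)) = f 1 * f 1 + (\<Sum>i\<le>1. of_nat (i + 1) * f (i + 1) * P (1 - i) 1 1)"
      using E1[OF n1(1)] .
    then have "f 1 * (f 0 * h 1 + f 1 * h 0) = f 1 * f 1 + f 1 * P 1 1 1"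
      using e0 by (simp add: cP.sum2)
    then have "f 1 * (h 1 + f 1) = f 1 * f 1 + f 1 * f 1" using F0' H0' e0 by (simp add: f_def)
    then have "f 1 * h 1 = f 1 * f 1" by (simp add: algebra_simps)
    then show ?thesis using f1 by simp
  qed
  define Fs where "Fs = Abs_fps f"
  define Hs where "Hs = Abs_fps h"
  define Es where "Es = Abs_fps (\<lambda>t. P t 1 1)"
  have fin: "fps_nth Fs t = fps_nth Hs t" if "t < n" for t
  proof (rule final_fps[of Fs Hs Es "f 1" n])
    show "fps_nth Fs 0 = 1" using F0' by (simp add: Fs_def)
    show "fps_nth Hs 0 = 1" using H0' by (simp add: Hs_def)
    show "fps_nth Es 0 = 0" using e0 by (simp add: Es_def)
    show "fps_nth Es 1 = f 1" by (simp add: Es_def f_def)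
    show "f 1 \<noteq> 0" by (rule f1)
    show "t < n" by (rule that)
  next
    fix j assume j: "j < n"
    show "f 1 * fps_nth (Fs * Hs) j = f 1 * fps_nth Fs j + fps_nth (fps_deriv Fs * Es) j"
      using E1[OF j] by (simp add: Fs_def Hs_def Es_def fps_mult_nth atLeast0AtMost)
    show "f 1 * fps_nth (Hs * Hs) j = f 1 * fps_nth Hs j + fps_nth (fps_deriv Hs * Es) j"
      using E3[OF j] h1 by (simp add: Fs_def Hs_def Es_def fps_mult_nth atLeast0AtMost)
  qed
  show ?thesis
  proof (intro allI impI)
    fix r assume "r < n"
    from fin[OF this] show "D 1 r 1 = P 1 r 1" by (simp add: Fs_def Hs_def f_def h_def)
  qed
qed

end
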